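(* Let $(\Omega,\mathcal F,\mu)$ be a measure space, $p\in[1,\infty)$ and $\mathscr A\subset L^p(\Omega,\mathcal F,\mu)$. The following are equivalent: (i) $\mathscr A$ is uniformly approximable in $L^p$; (ii) $\lim_{k\to\infty}\sup_{f\in\mathscr A}\mathrm{Var}_{p,k}(f)=0$. In this case, setting $r_\varepsilon(\mathscr A)=\min\{k\in\mathbb N:\ \sup_{f\in\mathscr A}\mathrm{Var}_{p,k}(f)\le\varepsilon\}$, one has $r_{2\varepsilon}(\mathscr A)\le N_{p,\varepsilon}(\mathscr A)\le r_\varepsilon(\mathscr A)+1$ for every $\varepsilon>0$. If moreover $\mu$ is finite, (i) and (ii) are equivalent to (iii) $\lim_{k\to\infty}\sup_{f\in\mathscr A}\mathrm{Var}_{p,k}(f,\Omega)=0$, and with $m_\varepsilon(\mathscr A)=\min\{k\in\mathbb N:\ \sup_{f\in\mathscr A}\mathrm{Var}_{p,k}(f,\Omega)\le\varepsilon\}$ one has $m_{2\varepsilon}(\mathscr A)\le r_{2\varepsilon}(\mathscr A)\le N_{p,\varepsilon}(\mathscr A)\le m_\varepsilon(\mathscr A)\le r_\varepsilon(\mathscr A)$ for all $\varepsilon>0$.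
   Context: All measures are assumed not identically zero. $\mathscr G_{p,k}$ is the set of functions $\sum_{i=1}^l a_i\mathbf 1_{A_i}\in L^p$ with $l\le k$, $\{A_i\}$ a measurable partition of $\Omega$, $a_i\in\mathbb R$. $N_{p,\varepsilon}(\mathscr A)=\inf\{k\ge1:\ \forall f\in\mathscr A\ \exists h\in\mathscr G_{p,k},\ \|f-h\|_p\le\varepsilon\}$ ($\inf\emptyset=\infty$); $\mathscr A$ is uniformly approximable if this is finite for all $\varepsilon>0$. $p$-variation: for $f\in L^p$ and measurable $A$ with $\mu(A)<\infty$, $\mathrm{var}_p(f,A)^p=\frac1{\mu(A)}\int_{A\times A}|f(x)-f(y)|^p\,d\mu(x)d\mu(y)$ if $\mu(A)>0$ and $0$ otherwise; for a finite collection $\mathcal P=(A_i)$ of disjoint measurable sets of finite measure, $\mathrm{var}_p(f,\mathcal P)=(\sum_i\mathrm{var}_p(f,A_i)^p)^{1/p}$; $\mathrm{Var}_{p,k}(f,A)=\inf\{\mathrm{var}_p(f,\mathcal P):\ \mathcal P$ a measurable partition of $A$ with at most $k$ sets$\}$; $\mathrm{Var}_{p,k}(f)=\sup\{\mathrm{Var}_{p,k}(f,A):\ A\in\mathcal F,\ \mu(A)<\infty\}$. *)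

theory Defs
  imports "HOL-Analysis.Analysis" "HOL-Library.Extended_Nat"
begin

text \<open>Functions f : Omega -> R in L^p (representatives; all notions below are
  invariant under a.e. equality).\<close>
definition in_Lp :: "'a measure \<Rightarrow> real \<Rightarrow> ('a \<Rightarrow> real) \<Rightarrow> bool" where
  "in_Lp M p f \<longleftrightarrow> f \<in> borel_measurable M \<and> integrable M (\<lambda>x. \<bar>f x\<bar> powr p)"

definition Lp_norm :: "'a measure \<Rightarrow> real \<Rightarrow> ('a \<Rightarrow> real) \<Rightarrow> real" where
  "Lp_norm M p f = (LINT x|M. \<bar>f x\<bar> powr p) powr (1 / p)"

definition step_fun_set :: "'a measure \<Rightarrow> real \<Rightarrow> nat \<Rightarrow> ('a \<Rightarrow> real) set" where
  "step_fun_set M p k = {h. in_Lp M p h \<and>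
     (\<exists>l A a. l \<le> k \<and> (\<forall>i<l. A i \<in> sets M) \<and> disjoint_family_on A {..<l} \<and>
        (\<Union>i<l. A i) = space M \<and> h = (\<lambda>x. \<Sum>i<l. a i * indicator (A i) x))}"

text \<open>N_{p,eps}(A), with inf of the empty set = infinity.\<close>
definition N_approx :: "'a measure \<Rightarrow> real \<Rightarrow> real \<Rightarrow> ('a \<Rightarrow> real) set \<Rightarrow> enat" where
  "N_approx M p \<epsilon> \<A> = Inf {enat k | k. k \<ge> 1 \<and>
     (\<forall>f\<in>\<A>. \<exists>h\<in>step_fun_set M p k. Lp_norm M p (\<lambda>x. f x - h x) \<le> \<epsilon>)}"

definition unif_approx :: "'a measure \<Rightarrow> real \<Rightarrow> ('a \<Rightarrow> real) set \<Rightarrow> bool" where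
  "unif_approx M p \<A> \<longleftrightarrow> (\<forall>\<epsilon>>0. N_approx M p \<epsilon> \<A> \<noteq> \<infinity>)"

text \<open>var_p(f,A) (for A of finite measure): the double integral is taken as an
  iterated integral of a nonnegative function.\<close>
definition var_p :: "'a measure \<Rightarrow> real \<Rightarrow> ('a \<Rightarrow> real) \<Rightarrow> 'a set \<Rightarrow> real" where
  "var_p M p f A = (if 0 < measure M A then
     ((1 / measure M A) *
       enn2real (\<integral>\<^sup>+ x\<in>A. (\<integral>\<^sup>+ y\<in>A. ennreal (\<bar>f x - f y\<bar> powr p) \<partial>M) \<partial>M)) powr (1 / p)
     else 0)"

definition var_coll :: "'a measure \<Rightarrow> real \<Rightarrow> ('a \<Rightarrow> real) \<Rightarrow> nat \<Rightarrow> (nat \<Rightarrow> 'a set) \<Rightarrow> real" where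
  "var_coll M p f l P = (\<Sum>i<l. var_p M p f (P i) powr p) powr (1 / p)"

definition Var_k_on :: "'a measure \<Rightarrow> real \<Rightarrow> nat \<Rightarrow> ('a \<Rightarrow> real) \<Rightarrow> 'a set \<Rightarrow> ennreal" where
  "Var_k_on M p k f A = (INF (l, P) \<in> {(l, P). l \<le> k \<and> (\<forall>i<l. P i \<in> sets M) \<and>
       disjoint_family_on P {..<l} \<and> (\<Union>i<l. P i) = A}. ennreal (var_coll M p f l P))"

definition Var_k :: "'a measure \<Rightarrow> real \<Rightarrow> nat \<Rightarrow> ('a \<Rightarrow> real) \<Rightarrow> ennreal" where
  "Var_k M p k f = (SUP A \<in> {A \<in> sets M. emeasure M A < \<infinity>}. Var_k_on M p k f A)"

definition r_eps :: "'a measure \<Rightarrow> real \<Rightarrow> ('a \<Rightarrow> real) set \<Rightarrow> real \<Rightarrow> nat" where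
  "r_eps M p \<A> \<epsilon> = (LEAST k. k \<ge> 1 \<and> (SUP f\<in>\<A>. Var_k M p k f) \<le> ennreal \<epsilon>)"

definition m_eps :: "'a measure \<Rightarrow> real \<Rightarrow> ('a \<Rightarrow> real) set \<Rightarrow> real \<Rightarrow> nat" where
  "m_eps M p \<A> \<epsilon> = (LEAST k. k \<ge> 1 \<and> (SUP f\<in>\<A>. Var_k_on M p k f (space M)) \<le> ennreal \<epsilon>)"

end

theory Submission
  imports Defs
begin

lemma half_powr_convex:
  fixes a b p :: real assumes p: "1 \<le> p" and a: "0 \<le> a" and b: "0 \<le> b"
  shows "((a+b)/2) powr p \<le> (a powr p + b powr p)/2"
proof (cases "a = 0 \<or> b = 0")
  case True
  have key: "(c/2) powr p \<le> c powr p / 2" if c: "0 \<le> c" for c :: real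
  proof -
    have "(c/2) powr p = c powr p / 2 powr p" using c by (simp add: powr_divide)
    moreover have "2 powr p \<ge> 2" using powr_mono[OF p, of 2] by simp
    moreover have "c powr p * 2 \<le> c powr p * 2 powr p"
      using \<open>2 powr p \<ge> 2\<close> by (intro mult_left_mono) simp_all
    ultimately show ?thesis by (simp add: divide_le_eq)
  qed
  show ?thesis using True key[of a] key[of b] a b p by auto
next
  case False
  then have "a > 0" "b > 0" using a b by auto
  then show ?thesis
    using convex_onD[OF powr_convex[OF p], of "1/2" a b] by (simp add: add_divide_distrib)
qed

lemma abs_diff_powr_le:
  fixes u v p :: real assumes p: "1 \<le> p"
  shows "\<bar>u - v\<bar> powr p \<le> 2 powr (p-1) * (\<bar>u\<bar> powr p + \<bar>v\<bar> powr p)"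
proof -
  have "\<bar>u - v\<bar> powr p \<le> (\<bar>u\<bar> + \<bar>v\<bar>) powr p" using p by (intro powr_mono2) auto
  also have "\<dots> = (2 * ((\<bar>u\<bar> + \<bar>v\<bar>)/2)) powr p" by (simp only: times_divide_eq_right nonzero_mult_div_cancel_left zero_neq_numeral)
  also have "\<dots> = 2 powr p * ((\<bar>u\<bar> + \<bar>v\<bar>)/2) powr p" by (subst powr_mult) auto
  also have "\<dots> \<le> 2 powr p * ((\<bar>u\<bar> powr p + \<bar>v\<bar> powr p)/2)"
    using half_powr_convex[OF p, of "\<bar>u\<bar>" "\<bar>v\<bar>"] by (intro mult_left_mono) auto
  also have "\<dots> = 2 powr (p-1) * (\<bar>u\<bar> powr p + \<bar>v\<bar> powr p)"
    by (simp add: powr_diff)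
  finally show ?thesis .
qed

lemma in_Lp_meas: "in_Lp M p f \<Longrightarrow> f \<in> borel_measurable M"
  by (simp add: in_Lp_def)

lemma in_Lp_fin: "in_Lp M p f \<Longrightarrow> (\<integral>\<^sup>+x. ennreal (\<bar>f x\<bar> powr p) \<partial>M) < \<infinity>"
  unfolding in_Lp_def using integrableD(2)[of M "\<lambda>x. \<bar>f x\<bar> powr p"] by (simp add: less_top)

lemma Vbound:
  fixes f :: "'a \<Rightarrow> real"
  assumes p: "1 \<le> p" and fm[measurable]: "f \<in> borel_measurable M" and Q[measurable]: "Q \<in> sets M"
  shows "(\<integral>\<^sup>+ x\<in>Q. (\<integral>\<^sup>+ y\<in>Q. ennreal (\<bar>f x - f y\<bar> powr p) \<partial>M) \<partial>M)
     \<le> ennreal (2 powr p) * emeasure M Q * (\<integral>\<^sup>+x\<in>Q. ennreal (\<bar>f x - c\<bar> powr p) \<partial>M)"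
proof -
  define G where "G x = ennreal (\<bar>f x - c\<bar> powr p)" for x
  define K where "K = ennreal (2 powr (p - 1))"
  define I where "I = (\<integral>\<^sup>+x\<in>Q. G x \<partial>M)"
  have Gm[measurable]: "G \<in> borel_measurable M" unfolding G_def by measurable
  have pt: "ennreal (\<bar>f x - f y\<bar> powr p) \<le> K * (G x + G y)" for x y
  proof -
    have "\<bar>f x - f y\<bar> powr p = \<bar>(f x - c) - (f y - c)\<bar> powr p" by simp
    also have "\<dots> \<le> 2 powr (p-1) * (\<bar>f x - c\<bar> powr p + \<bar>f y - c\<bar> powr p)"
      by (rule abs_diff_powr_le[OF p])
    finally have "ennreal (\<bar>f x - f y\<bar> powr p) \<le> ennreal (2 powr (p-1) * (\<bar>f x - c\<bar> powr p + \<bar>f y - c\<bar> powr p))"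
      by (rule ennreal_leI)
    also have "\<dots> = K * (G x + G y)" unfolding K_def G_def by (simp add: ennreal_mult)
    finally show ?thesis .
  qed
  have inner: "(\<integral>\<^sup>+ y\<in>Q. K * (G x + G y) \<partial>M) = K * (G x * emeasure M Q + I)" for x
  proof -
    have "(\<integral>\<^sup>+ y\<in>Q. K * (G x + G y) \<partial>M) = (\<integral>\<^sup>+ y. (K * G x) * indicator Q y + K * (G y * indicator Q y) \<partial>M)"
      by (intro nn_integral_cong) (simp add: algebra_simps)
    also have "\<dots> = (\<integral>\<^sup>+ y. (K * G x) * indicator Q y \<partial>M) + (\<integral>\<^sup>+ y. K * (G y * indicator Q y) \<partial>M)"
      by (rule nn_integral_add) auto
    also have "\<dots> = K * G x * emeasure M Q + K * I"
      unfolding I_def by (simp add: nn_integral_cmult_indicator nn_integral_cmult)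
    finally show ?thesis by (simp add: algebra_simps)
  qed
  have "(\<integral>\<^sup>+ x\<in>Q. (\<integral>\<^sup>+ y\<in>Q. ennreal (\<bar>f x - f y\<bar> powr p) \<partial>M) \<partial>M)
      \<le> (\<integral>\<^sup>+ x\<in>Q. (\<integral>\<^sup>+ y\<in>Q. K * (G x + G y) \<partial>M) \<partial>M)"
    by (intro nn_integral_mono mult_right_mono pt) auto
  also have "\<dots> = (\<integral>\<^sup>+ x. (K * emeasure M Q) * (G x * indicator Q x) + (K * I) * indicator Q x \<partial>M)"
    unfolding inner by (intro nn_integral_cong) (simp add: algebra_simps)
  also have "\<dots> = (K * emeasure M Q) * I + (K * I) * emeasure M Q"
    by (subst nn_integral_add) (auto simp: nn_integral_cmult nn_integral_cmult_indicator I_def)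
  also have "\<dots> = (K * 2) * emeasure M Q * I"
    by (simp add: algebra_simps mult_2_right)
  also have "K * 2 = ennreal (2 powr p)"
  proof -
    have "K * 2 = ennreal (2 powr (p - 1) * 2)" unfolding K_def by (simp add: ennreal_mult)
    also have "2 powr (p - 1) * 2 = 2 powr p" by (simp add: powr_diff)
    finally show ?thesis .
  qed
  finally show ?thesis unfolding I_def G_def .
qed

lemma powr_inv_powr: "0 \<le> (X::real) \<Longrightarrow> 0 < p \<Longrightarrow> (X powr (1/p)) powr p = X"
proof -
  assume nn: "0 \<le> X" and p: "0 < p"
  have "(X powr (1/p)) powr p = X powr (1/p * p)" by (rule powr_powr)
  also have "1/p * p = 1" using p by simp
  also have "X powr 1 = X" using nn by simp
  finally show ?thesis .
qed

lemma powr_powr_inv: "0 \<le> (X::real) \<Longrightarrow> 0 < p \<Longrightarrow> (X powr p) powr (1/p) = X"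
proof -
  assume nn: "0 \<le> X" and p: "0 < p"
  have "(X powr p) powr (1/p) = X powr (p * (1/p))" by (rule powr_powr)
  also have "p * (1/p) = 1" using p by simp
  also have "X powr 1 = X" using nn by simp
  finally show ?thesis .
qed

lemma var_p_pow:
  assumes p: "0 < p"
  shows "var_p M p f Q powr p = (if 0 < measure M Q then (1 / measure M Q) *
       enn2real (\<integral>\<^sup>+ x\<in>Q. (\<integral>\<^sup>+ y\<in>Q. ennreal (\<bar>f x - f y\<bar> powr p) \<partial>M) \<partial>M) else 0)"
proof (cases "0 < measure M Q")
  case True
  define X where "X = (1 / measure M Q) *
       enn2real (\<integral>\<^sup>+ x\<in>Q. (\<integral>\<^sup>+ y\<in>Q. ennreal (\<bar>f x - f y\<bar> powr p) \<partial>M) \<partial>M)"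
  have nn: "0 \<le> X" using True unfolding X_def by simp
  have "var_p M p f Q = X powr (1/p)" unfolding var_p_def X_def using True by (simp only: if_True)
  then show ?thesis using True powr_inv_powr[OF nn p] unfolding X_def by (simp only: if_True)
next
  case False
  then show ?thesis using p unfolding var_p_def by simp
qed

lemma var_p_nonneg: "0 \<le> var_p M p f Q"
  unfolding var_p_def by (simp only: if_split powr_ge_zero order_refl) simp

lemma meas_inner:
  assumes Q[measurable]: "Q \<in> sets M" and Qf: "emeasure M Q < \<infinity>"
    and F[measurable]: "case_prod F \<in> borel_measurable (M \<Otimes>\<^sub>M M)"
  shows "(\<lambda>x. \<integral>\<^sup>+y\<in>Q. F x y \<partial>M) \<in> borel_measurable M"
proof -
  define D where "D = density M (indicator Q)"
  have "emeasure D (space D) = (\<integral>\<^sup>+x. indicator Q x * indicator (space M) x \<partial>M)"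
    unfolding D_def by (subst emeasure_density) auto
  also have "\<dots> = (\<integral>\<^sup>+x. indicator Q x \<partial>M)"
    by (intro nn_integral_cong) simp
  also have "\<dots> = emeasure M Q" by simp
  finally have "emeasure D (space D) = emeasure M Q" .
  then have "finite_measure D" using Qf by (intro finite_measureI) simp
  then interpret D: finite_measure D .
  have sD: "sets D = sets M" unfolding D_def by simp
  have F': "case_prod F \<in> borel_measurable (M \<Otimes>\<^sub>M D)"
    using F by (subst measurable_cong_sets[OF sets_pair_measure_cong[OF refl sD] refl]) 
  have m1: "(\<lambda>x. \<integral>\<^sup>+y. F x y \<partial>D) \<in> borel_measurable M"
    by (rule D.borel_measurable_nn_integral[OF F'])
  have eq: "(\<integral>\<^sup>+y. F x y \<partial>D) = (\<integral>\<^sup>+y\<in>Q. F x y \<partial>M)" if x: "x \<in> space M" for x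
  proof -
    have [measurable]: "(\<lambda>y. F x y) \<in> borel_measurable M"
      using measurable_Pair2[OF F x] by simp
    show ?thesis unfolding D_def by (subst nn_integral_density) (auto simp: mult.commute)
  qed
  show ?thesis using m1 by (subst measurable_cong[OF eq[symmetric]]) auto
qed

lemma exists_c:
  assumes p: "1 \<le> p" and f: "in_Lp M p f" and Q[measurable]: "Q \<in> sets M" and Qf: "emeasure M Q < \<infinity>"
  shows "\<exists>c. (\<integral>\<^sup>+x\<in>Q. ennreal (\<bar>f x - c\<bar> powr p) \<partial>M) \<le> ennreal (var_p M p f Q powr p)"
proof (cases "0 < measure M Q")
  case False
  have "measure M Q = 0" using False measure_nonneg[of M Q] by linarith
  then have "emeasure M Q = 0" using Qf by (simp add: emeasure_eq_ennreal_measure less_top)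
  then have "Q \<in> null_sets M" by auto
  then show ?thesis by (intro exI[of _ 0]) (simp add: nn_integral_null_set)
next
  case True
  have fm[measurable]: "f \<in> borel_measurable M" using f by (rule in_Lp_meas)
  define V where "V = (\<integral>\<^sup>+ x\<in>Q. (\<integral>\<^sup>+ y\<in>Q. ennreal (\<bar>f x - f y\<bar> powr p) \<partial>M) \<partial>M)"
  have QT: "emeasure M Q \<noteq> top" using Qf by simp
  have Q0: "emeasure M Q \<noteq> 0" using True QT by (simp add: emeasure_eq_ennreal_measure)
  have "V \<le> ennreal (2 powr p) * emeasure M Q * (\<integral>\<^sup>+x\<in>Q. ennreal (\<bar>f x - 0\<bar> powr p) \<partial>M)"
    unfolding V_def by (rule Vbound[OF p fm Q])
  also have "(\<integral>\<^sup>+x\<in>Q. ennreal (\<bar>f x - 0\<bar> powr p) \<partial>M) \<le> (\<integral>\<^sup>+x. ennreal (\<bar>f x\<bar> powr p) \<partial>M)"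
    by (intro nn_integral_mono) (simp add: indicator_def)
  finally have "V \<le> ennreal (2 powr p) * emeasure M Q * (\<integral>\<^sup>+x. ennreal (\<bar>f x\<bar> powr p) \<partial>M)"
    by (simp add: mult_left_mono)
  also have "\<dots> < top" using in_Lp_fin[OF f] QT by (simp add: ennreal_mult_less_top less_top)
  finally have VT: "V < top" .
  define g where "g x = (\<integral>\<^sup>+y\<in>Q. ennreal (\<bar>f y - f x\<bar> powr p) \<partial>M)" for x
  have gm[measurable]: "g \<in> borel_measurable M"
    unfolding g_def by (rule meas_inner[OF Q Qf, where F="\<lambda>x y. ennreal (\<bar>f y - f x\<bar> powr p)"]) measurable
  have Vg: "V = (\<integral>\<^sup>+x\<in>Q. g x \<partial>M)"
    unfolding V_def g_def by (simp add: abs_minus_commute)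
  define t where "t = V / emeasure M Q"
  have tQ: "t * emeasure M Q = V"
    unfolding t_def using Q0 QT by (simp add: ennreal_divide_times ennreal_divide_self less_top)
  have "\<exists>x\<in>Q. g x \<le> t"
  proof (rule ccontr)
    assume "\<not> (\<exists>x\<in>Q. g x \<le> t)"
    then have lt: "\<And>x. x \<in> Q \<Longrightarrow> t < g x" by (auto simp: not_le)
    have "(\<integral>\<^sup>+x. t * indicator Q x \<partial>M) < (\<integral>\<^sup>+x. g x * indicator Q x \<partial>M)"
    proof (rule nn_integral_less)
      show "(\<integral>\<^sup>+x. t * indicator Q x \<partial>M) \<noteq> \<infinity>" using tQ VT by (simp add: nn_integral_cmult_indicator)
      show "AE x in M. t * indicator Q x \<le> g x * indicator Q x"
        using lt by (intro AE_I2) (auto simp: indicator_def less_imp_le)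
      show "\<not> (AE x in M. g x * indicator Q x \<le> t * indicator Q x)"
      proof
        assume "AE x in M. g x * indicator Q x \<le> t * indicator Q x"
        then have "AE x in M. x \<notin> Q"
          by eventually_elim (metis (no_types) lt leD indicator_simps(1) mult_1_right)
        then have "Q \<in> null_sets M" using AE_iff_null_sets[OF Q] by simp
        then show False using Q0 by auto
      qed
    qed measurable
    then show False using tQ Vg by (simp add: nn_integral_cmult_indicator)
  qed
  then obtain x where x: "x \<in> Q" "g x \<le> t" by blast
  have "t = ennreal (var_p M p f Q powr p)"
  proof -
    have "var_p M p f Q powr p = (1 / measure M Q) * enn2real V"
      using var_p_pow[of p M f Q] p True unfolding V_def by simp
    also have "\<dots> = enn2real V / measure M Q" by simp
    finally have "ennreal (var_p M p f Q powr p) = ennreal (enn2real V) / ennreal (measure M Q)"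
      using True by (simp add: divide_ennreal)
    also have "\<dots> = t" unfolding t_def using VT QT
      by (simp add: ennreal_enn2real emeasure_eq_ennreal_measure less_top)
    finally show ?thesis ..
  qed
  then show ?thesis using x unfolding g_def by (intro exI[of _ "f x"]) simp
qed

lemma var_coll_pow:
  assumes p: "0 < p"
  shows "var_coll M p f l P powr p = (\<Sum>i<l. var_p M p f (P i) powr p)"
proof -
  have "0 \<le> (\<Sum>i<l. var_p M p f (P i) powr p)" by (intro sum_nonneg) simp
  then show ?thesis using p unfolding var_coll_def by (rule powr_inv_powr)
qed

lemma part_bound:
  assumes p: "1 \<le> p" and f: "in_Lp M p f" and P: "\<forall>i<l. P i \<in> sets M" "(\<Union>i<l. P i) = A"
    and fin: "\<forall>i<l. emeasure M (P i) < \<infinity>"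
  shows "\<exists>a. (\<integral>\<^sup>+x. (INF i\<in>{..<l}. ennreal (\<bar>f x - a i\<bar> powr p)) * indicator A x \<partial>M)
           \<le> ennreal (var_coll M p f l P powr p)"
proof -
  have fm[measurable]: "f \<in> borel_measurable M" using f by (rule in_Lp_meas)
  have "\<forall>i. \<exists>c. i < l \<longrightarrow> (\<integral>\<^sup>+x\<in>P i. ennreal (\<bar>f x - c\<bar> powr p) \<partial>M) \<le> ennreal (var_p M p f (P i) powr p)"
    using exists_c[OF p f] P fin by blast
  then obtain a where a: "\<And>i. i < l \<Longrightarrow> (\<integral>\<^sup>+x\<in>P i. ennreal (\<bar>f x - a i\<bar> powr p) \<partial>M) \<le> ennreal (var_p M p f (P i) powr p)"
    using choice[of "\<lambda>i c. i < l \<longrightarrow> (\<integral>\<^sup>+x\<in>P i. ennreal (\<bar>f x - c\<bar> powr p) \<partial>M) \<le> ennreal (var_p M p f (P i) powr p)"] by blast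
  have Pm[measurable]: "\<And>i. i < l \<Longrightarrow> P i \<in> sets M" using P by auto
  have "(\<integral>\<^sup>+x. (INF i\<in>{..<l}. ennreal (\<bar>f x - a i\<bar> powr p)) * indicator A x \<partial>M)
      \<le> (\<integral>\<^sup>+x. (\<Sum>i<l. ennreal (\<bar>f x - a i\<bar> powr p) * indicator (P i) x) \<partial>M)"
  proof (intro nn_integral_mono)
    fix x assume "x \<in> space M"
    show "(INF i\<in>{..<l}. ennreal (\<bar>f x - a i\<bar> powr p)) * indicator A x
        \<le> (\<Sum>i<l. ennreal (\<bar>f x - a i\<bar> powr p) * indicator (P i) x)"
    proof (cases "x \<in> A")
      case True
      then obtain j where j: "j < l" "x \<in> P j" using P(2) by auto
      have "(INF i\<in>{..<l}. ennreal (\<bar>f x - a i\<bar> powr p)) * indicator A x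
           \<le> ennreal (\<bar>f x - a j\<bar> powr p) * indicator (P j) x"
        using j True by (simp add: INF_lower2[of j])
      also have "\<dots> \<le> (\<Sum>i<l. ennreal (\<bar>f x - a i\<bar> powr p) * indicator (P i) x)"
        using j by (intro member_le_sum) auto
      finally show ?thesis .
    qed simp
  qed
  also have "\<dots> = (\<Sum>i<l. \<integral>\<^sup>+x. ennreal (\<bar>f x - a i\<bar> powr p) * indicator (P i) x \<partial>M)"
    by (intro nn_integral_sum) auto
  also have "\<dots> \<le> (\<Sum>i<l. ennreal (var_p M p f (P i) powr p))"
    by (intro sum_mono) (use a in auto)
  also have "\<dots> = ennreal (\<Sum>i<l. var_p M p f (P i) powr p)"
    by (intro sum_ennreal) simp
  also have "\<dots> = ennreal (var_coll M p f l P powr p)"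
    using p by (simp add: var_coll_pow)
  finally show ?thesis by blast
qed

definition qerr :: "'a measure \<Rightarrow> real \<Rightarrow> ('a \<Rightarrow> real) \<Rightarrow> nat \<Rightarrow> (nat \<Rightarrow> real) \<Rightarrow> ennreal" where
  "qerr M p f n a = (\<integral>\<^sup>+x. (INF i\<in>{..<n}. ennreal (\<bar>f x - a i\<bar> powr p)) \<partial>M)"

lemma subseq_conv:
  fixes a :: "nat \<Rightarrow> nat \<Rightarrow> real"
  shows "\<exists>r. strict_mono r \<and> (\<forall>i<n. \<exists>l. (\<lambda>m. ereal (a (r m) i)) \<longlonglongrightarrow> l)"
proof (induction n)
  case 0
  show ?case by (intro exI[of _ id]) (auto simp: strict_mono_def)
next
  case (Suc n)
  then obtain r where r: "strict_mono r" "\<forall>i<n. \<exists>l. (\<lambda>m. ereal (a (r m) i)) \<longlonglongrightarrow> l" by blast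
  obtain s where s: "strict_mono s" "monoseq (\<lambda>m. ereal (a (r (s m)) n))"
    using seq_monosub[of "\<lambda>m. ereal (a (r m) n)"] by blast
  have "\<exists>l. (\<lambda>m. ereal (a (r (s m)) n)) \<longlonglongrightarrow> l"
    using s(2) unfolding monoseq_iff by (metis LIMSEQ_SUP LIMSEQ_INF)
  moreover have "\<exists>l. (\<lambda>m. ereal (a (r (s m)) i)) \<longlonglongrightarrow> l" if "i < n" for i
  proof -
    obtain l where "(\<lambda>m. ereal (a (r m) i)) \<longlonglongrightarrow> l" using r(2) \<open>i < n\<close> by blast
    from LIMSEQ_subseq_LIMSEQ[OF this s(1)] show ?thesis by (auto simp: o_def)
  qed
  ultimately show ?case
    using strict_mono_o[OF r(1) s(1)] by (intro exI[of _ "r \<circ> s"]) (auto simp: less_Suc_eq o_def)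
qed

lemma INF_tendsto:
  fixes g :: "nat \<Rightarrow> nat \<Rightarrow> ennreal"
  shows "(\<And>i. i < n \<Longrightarrow> (\<lambda>m. g m i) \<longlonglongrightarrow> L i) \<Longrightarrow>
    (\<lambda>m. INF i\<in>{..<n}. g m i) \<longlonglongrightarrow> (INF i\<in>{..<n}. L i)"
proof (induction n)
  case 0
  then show ?case by simp
next
  case (Suc n)
  have "(\<lambda>m. min (g m n) (INF i\<in>{..<n}. g m i)) \<longlonglongrightarrow> min (L n) (INF i\<in>{..<n}. L i)"
    using Suc by (intro tendsto_min) auto
  then show ?case by (simp add: lessThan_Suc inf_min)
qed

lemma coord_lim:
  fixes s :: "nat \<Rightarrow> real"
  assumes p: "1 \<le> p" and l: "(\<lambda>m. ereal (s m)) \<longlonglongrightarrow> l"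
  shows "(\<lambda>m. ennreal (\<bar>y - s m\<bar> powr p)) \<longlonglongrightarrow>
     (if \<bar>l\<bar> \<noteq> \<infinity> then ennreal (\<bar>y - real_of_ereal l\<bar> powr p) else top)"
proof (cases "\<bar>l\<bar> \<noteq> \<infinity>")
  case True
  then obtain c where c: "l = ereal c" by auto
  then have "s \<longlonglongrightarrow> c" using l by simp
  then have "(\<lambda>m. \<bar>y - s m\<bar> powr p) \<longlonglongrightarrow> \<bar>y - c\<bar> powr p"
    using p by (intro tendsto_powr' tendsto_intros) auto
  then show ?thesis using c by (auto intro: tendsto_ennrealI)
next
  case False
  then have inf: "l = \<infinity> \<or> l = - \<infinity>" by auto
  have "filterlim (\<lambda>m. \<bar>y - s m\<bar>) at_top sequentially"
    unfolding filterlim_at_top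
  proof
    fix Z :: real
    show "eventually (\<lambda>m. Z \<le> \<bar>y - s m\<bar>) sequentially"
      using inf
    proof
      assume "l = \<infinity>"
      then have "eventually (\<lambda>m. ereal (Z + \<bar>y\<bar>) < ereal (s m)) sequentially"
        using l[unfolded \<open>l = \<infinity>\<close> tendsto_PInfty] by blast
      then show ?thesis by eventually_elim auto
    next
      assume "l = - \<infinity>"
      then have "eventually (\<lambda>m. ereal (s m) < ereal (- (Z + \<bar>y\<bar>))) sequentially"
        using l[unfolded \<open>l = - \<infinity>\<close> tendsto_MInfty] by blast
      then show ?thesis by eventually_elim auto
    qed
  qed
  moreover have "eventually (\<lambda>m. \<bar>y - s m\<bar> \<le> \<bar>y - s m\<bar> powr p) sequentially"
  proof -
    have "eventually (\<lambda>m. 1 \<le> \<bar>y - s m\<bar>) sequentially"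
      using calculation unfolding filterlim_at_top by blast
    then show ?thesis
    proof eventually_elim
      case (elim m)
      then have "\<bar>y - s m\<bar> powr 1 \<le> \<bar>y - s m\<bar> powr p" using p by (intro powr_mono) auto
      then show ?case using elim by simp
    qed
  qed
  ultimately have "filterlim (\<lambda>m. \<bar>y - s m\<bar> powr p) at_top sequentially"
    by (rule filterlim_at_top_mono)
  then show ?thesis using False by (simp add: ennreal_tendsto_top_eq_at_top)
qed

lemma INF_meas[measurable]:
  fixes f :: "'a \<Rightarrow> real" and c :: "nat \<Rightarrow> real" and n :: nat
  assumes [measurable]: "f \<in> borel_measurable M"
  shows "(\<lambda>x. INF i\<in>{..<n}. ennreal (\<bar>f x - c i\<bar> powr p)) \<in> borel_measurable M"
proof (induction n)
  case 0
  then show ?case by simp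
next
  case (Suc n)
  have "(\<lambda>x. min (ennreal (\<bar>f x - c n\<bar> powr p)) (INF i\<in>{..<n}. ennreal (\<bar>f x - c i\<bar> powr p))) \<in> borel_measurable M"
    using Suc by measurable
  then show ?case by (simp add: lessThan_Suc inf_min)
qed

lemma compact_qerr:
  assumes p: "1 \<le> p" and fm[measurable]: "f \<in> borel_measurable M"
    and nz: "emeasure M (space M) \<noteq> 0"
    and le: "\<And>m. qerr M p f n (a m) \<le> u m" and u: "u \<longlonglongrightarrow> L" and L: "L < \<infinity>"
  shows "\<exists>b. qerr M p f n b \<le> L \<and> (\<forall>i<n. (\<forall>m. a m i = 0) \<longrightarrow> b i = 0)"
proof -
  obtain r where r: "strict_mono r" "\<forall>i<n. \<exists>l. (\<lambda>m. ereal (a (r m) i)) \<longlonglongrightarrow> l"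
    using subseq_conv[of n a] by blast
  obtain lim where lim: "\<And>i. i < n \<Longrightarrow> (\<lambda>m. ereal (a (r m) i)) \<longlonglongrightarrow> lim i"
    using r(2) by metis
  define \<psi> where "\<psi> x i = (if \<bar>lim i\<bar> \<noteq> \<infinity> then ennreal (\<bar>f x - real_of_ereal (lim i)\<bar> powr p) else top)" for x i
  have pt: "(\<lambda>m. INF i\<in>{..<n}. ennreal (\<bar>f x - a (r m) i\<bar> powr p)) \<longlonglongrightarrow> (INF i\<in>{..<n}. \<psi> x i)" for x
    unfolding \<psi>_def by (intro INF_tendsto coord_lim[OF p] lim)
  have F1: "(\<integral>\<^sup>+ x. liminf (\<lambda>m. INF i\<in>{..<n}. ennreal (\<bar>f x - a (r m) i\<bar> powr p)) \<partial>M)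
      \<le> liminf (\<lambda>m. qerr M p f n (a (r m)))"
    unfolding qerr_def by (rule nn_integral_liminf) measurable
  have F2: "liminf (\<lambda>m. INF i\<in>{..<n}. ennreal (\<bar>f x - a (r m) i\<bar> powr p)) = (INF i\<in>{..<n}. \<psi> x i)" for x
    by (rule lim_imp_Liminf[OF trivial_limit_sequentially pt])
  have F3: "liminf (\<lambda>m. qerr M p f n (a (r m))) \<le> liminf (\<lambda>m. u (r m))"
    using le by (intro Liminf_mono) auto
  have F4: "liminf (\<lambda>m. u (r m)) = L"
    using LIMSEQ_subseq_LIMSEQ[OF u r(1)] by (intro lim_imp_Liminf) (auto simp: o_def)
  have "(\<integral>\<^sup>+ x. (INF i\<in>{..<n}. \<psi> x i) \<partial>M)
     = (\<integral>\<^sup>+ x. liminf (\<lambda>m. INF i\<in>{..<n}. ennreal (\<bar>f x - a (r m) i\<bar> powr p)) \<partial>M)"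
    by (simp only: F2)
  also note F1
  also note F3
  also note F4
  finally have int: "(\<integral>\<^sup>+ x. (INF i\<in>{..<n}. \<psi> x i) \<partial>M) \<le> L" .
  obtain j0 where j0: "j0 < n" "\<bar>lim j0\<bar> \<noteq> \<infinity>"
  proof (rule ccontr)
    assume "\<not> thesis"
    with that have "\<forall>j<n. \<bar>lim j\<bar> = \<infinity>" by blast
    then have "\<And>x. (INF i\<in>{..<n}. \<psi> x i) = top" unfolding \<psi>_def by (auto intro: INF_eqI)
    then have "(\<integral>\<^sup>+ x. (INF i\<in>{..<n}. \<psi> x i) \<partial>M) = top" using nz by simp
    then show False using int L by simp
  qed
  define b where "b i = (if \<bar>lim i\<bar> \<noteq> \<infinity> then real_of_ereal (lim i) else real_of_ereal (lim j0))" for i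
  have "qerr M p f n b \<le> (\<integral>\<^sup>+ x. (INF i\<in>{..<n}. \<psi> x i) \<partial>M)"
    unfolding qerr_def
  proof (intro nn_integral_mono INF_greatest)
    fix x i assume i: "i \<in> {..<n}"
    show "(INF i\<in>{..<n}. ennreal (\<bar>f x - b i\<bar> powr p)) \<le> \<psi> x i"
    proof (cases "\<bar>lim i\<bar> \<noteq> \<infinity>")
      case True
      then show ?thesis using i unfolding \<psi>_def b_def by (auto intro: INF_lower2[of i])
    qed (simp add: \<psi>_def)
  qed
  moreover have "b i = 0" if i: "i < n" and z: "\<forall>m. a m i = 0" for i
  proof -
    have "(\<lambda>m. ereal (a (r m) i)) = (\<lambda>m. 0)" using z by (simp add: zero_ereal_def)
    then have "lim i = 0" using lim[OF i] by (metis LIMSEQ_unique tendsto_const)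
    then show ?thesis unfolding b_def by simp
  qed
  ultimately show ?thesis using int by (intro exI[of _ b]) auto
qed

lemma sum_ind_single:
  fixes n :: nat
  assumes "disjoint_family_on B {..<n}" "i < n" "x \<in> B i"
  shows "(\<Sum>j<n. g j * indicator (B j) x) = (g i :: real)"
proof -
  have "(\<Sum>j<n. g j * indicator (B j) x) = (\<Sum>j<n. if j = i then g i else 0)"
  proof (intro sum.cong refl)
    fix j assume j: "j \<in> {..<n}"
    show "g j * indicator (B j) x = (if j = i then g i else 0)"
    proof (cases "j = i")
      case False
      then have "x \<notin> B j" using assms j unfolding disjoint_family_on_def by blast
      then show ?thesis using False by simp
    qed (use assms in simp)
  qed
  also have "\<dots> = g i" using assms by (subst sum.delta) auto
  finally show ?thesis .
qed

lemma build_h: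
  fixes f :: "'a \<Rightarrow> real" and b :: "nat \<Rightarrow> real"
  assumes p: "1 \<le> p" and fm[measurable]: "f \<in> borel_measurable M" and n: "0 < n"
  obtains A where "\<forall>i<n. A i \<in> sets M" "disjoint_family_on A {..<n}" "(\<Union>i<n. A i) = space M"
    "\<forall>x\<in>space M. ennreal (\<bar>f x - (\<Sum>i<n. b i * indicator (A i) x)\<bar> powr p) = (INF i\<in>{..<n}. ennreal (\<bar>f x - b i\<bar> powr p))"
    "\<forall>x\<in>space M. \<forall>i<n. \<bar>f x - (\<Sum>j<n. b j * indicator (A j) x)\<bar> \<le> \<bar>f x - b i\<bar>"
proof -
  define d where "d x i = \<bar>f x - b i\<bar>" for x i
  define A where "A i = {x\<in>space M. (\<forall>j\<in>{..<n}. d x i \<le> d x j) \<and> (\<forall>j\<in>{..<i}. d x i < d x j)}" for i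
  have Am: "\<forall>i<n. A i \<in> sets M" unfolding A_def d_def by measurable
  have nd: "x \<notin> A i'" if "x \<in> A i" "i < i'" "i' < n" for x i i'
  proof
    assume "x \<in> A i'"
    then have "d x i' < d x i" using that unfolding A_def by auto
    moreover have "d x i \<le> d x i'" using that unfolding A_def by auto
    ultimately show False by simp
  qed
  have disj: "disjoint_family_on A {..<n}"
    unfolding disjoint_family_on_def
  proof (intro ballI impI)
    fix i i' assume "i \<in> {..<n}" "i' \<in> {..<n}" "i \<noteq> i'"
    then have "i < i' \<or> i' < i" by auto
    then show "A i \<inter> A i' = {}" using nd \<open>i \<in> {..<n}\<close> \<open>i' \<in> {..<n}\<close> by auto
  qed
  have cover: "\<exists>i<n. x \<in> A i \<and> (\<forall>j<n. d x i \<le> d x j)" if x: "x \<in> space M" for x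
  proof -
    define S where "S = {i. i < n \<and> (\<forall>j<n. d x i \<le> d x j)}"
    have "Min (d x ` {..<n}) \<in> d x ` {..<n}" using n by (intro Min_in) auto
    then obtain i where i: "i < n" "d x i = Min (d x ` {..<n})" by auto
    then have "i \<in> S" unfolding S_def by (auto intro: Min_le)
    define i0 where "i0 = (LEAST i. i \<in> S)"
    have i0: "i0 \<in> S" unfolding i0_def using \<open>i \<in> S\<close> by (rule LeastI)
    have "d x i0 < d x j" if j: "j < i0" for j
    proof -
      have "j \<notin> S" using j unfolding i0_def by (rule not_less_Least)
      moreover have "j < n" using j i0 unfolding S_def by auto
      ultimately obtain j' where "j' < n" "d x j' < d x j" unfolding S_def by (auto simp: not_le)
      moreover have "d x i0 \<le> d x j'" using i0 \<open>j' < n\<close> unfolding S_def by auto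
      ultimately show ?thesis by simp
    qed
    then show ?thesis using i0 x unfolding S_def A_def by auto
  qed
  have hx: "(\<Sum>j<n. b j * indicator (A j) x) = b i" if "i < n" "x \<in> A i" for x i
    using sum_ind_single[OF disj that] .
  show ?thesis
  proof (rule that[OF Am disj])
    show "(\<Union>i<n. A i) = space M"
    proof
      show "(\<Union>i<n. A i) \<subseteq> space M" unfolding A_def by auto
      show "space M \<subseteq> (\<Union>i<n. A i)" using cover by blast
    qed
    show "\<forall>x\<in>space M. \<forall>i<n. \<bar>f x - (\<Sum>j<n. b j * indicator (A j) x)\<bar> \<le> \<bar>f x - b i\<bar>"
      using cover hx unfolding d_def by metis
    show "\<forall>x\<in>space M. ennreal (\<bar>f x - (\<Sum>i<n. b i * indicator (A i) x)\<bar> powr p) = (INF i\<in>{..<n}. ennreal (\<bar>f x - b i\<bar> powr p))"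
    proof
      fix x assume x: "x \<in> space M"
      obtain i where i: "i < n" "x \<in> A i" "\<forall>j<n. d x i \<le> d x j" using cover[OF x] by blast
      have "(INF j\<in>{..<n}. ennreal (\<bar>f x - b j\<bar> powr p)) = ennreal (\<bar>f x - b i\<bar> powr p)"
      proof (rule antisym)
        show "(INF j\<in>{..<n}. ennreal (\<bar>f x - b j\<bar> powr p)) \<le> ennreal (\<bar>f x - b i\<bar> powr p)"
          using i by (intro INF_lower) auto
        show "ennreal (\<bar>f x - b i\<bar> powr p) \<le> (INF j\<in>{..<n}. ennreal (\<bar>f x - b j\<bar> powr p))"
          using i p unfolding d_def by (intro INF_greatest ennreal_leI powr_mono2) auto
      qed
      then show "ennreal (\<bar>f x - (\<Sum>i<n. b i * indicator (A i) x)\<bar> powr p) = (INF i\<in>{..<n}. ennreal (\<bar>f x - b i\<bar> powr p))"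
        using hx[OF i(1,2)] by simp
    qed
  qed
qed

lemma qerr_to_step:
  assumes p: "1 \<le> p" and f: "in_Lp M p f" and n: "0 < n" "n \<le> k"
    and q: "qerr M p f n b \<le> ennreal (\<epsilon> powr p)" and e: "0 \<le> \<epsilon>"
    and hb: "emeasure M (space M) < \<infinity> \<or> (\<exists>i<n. b i = 0)"
  shows "\<exists>h\<in>step_fun_set M p k. Lp_norm M p (\<lambda>x. f x - h x) \<le> \<epsilon>"
proof -
  have fm[measurable]: "f \<in> borel_measurable M" using f by (rule in_Lp_meas)
  obtain A where A: "\<forall>i<n. A i \<in> sets M" "disjoint_family_on A {..<n}" "(\<Union>i<n. A i) = space M"
    "\<forall>x\<in>space M. ennreal (\<bar>f x - (\<Sum>i<n. b i * indicator (A i) x)\<bar> powr p) = (INF i\<in>{..<n}. ennreal (\<bar>f x - b i\<bar> powr p))"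
    "\<forall>x\<in>space M. \<forall>i<n. \<bar>f x - (\<Sum>j<n. b j * indicator (A j) x)\<bar> \<le> \<bar>f x - b i\<bar>"
    using build_h[OF p fm n(1), of b] by blast
  define h where "h x = (\<Sum>i<n. b i * indicator (A i) x)" for x
  have Am[measurable]: "\<And>i. i \<in> {..<n} \<Longrightarrow> A i \<in> sets M" using A(1) by auto
  have hm[measurable]: "h \<in> borel_measurable M"
    unfolding h_def by (intro borel_measurable_sum borel_measurable_times borel_measurable_const borel_measurable_indicator Am)
  have hval: "\<exists>i<n. h x = b i" if x: "x \<in> space M" for x
  proof -
    obtain i where "i < n" "x \<in> A i" using A(3) x by auto
    then show ?thesis unfolding h_def using sum_ind_single[OF A(2)] by blast
  qed
  have int: "integrable M (\<lambda>x. \<bar>h x\<bar> powr p)"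
    using hb
  proof
    assume fin: "emeasure M (space M) < \<infinity>"
    interpret finite_measure M using fin by (intro finite_measureI) simp
    show ?thesis
    proof (rule integrable_const_bound[where B="(\<Sum>i<n. \<bar>b i\<bar>) powr p"])
      show "AE x in M. norm (\<bar>h x\<bar> powr p) \<le> (\<Sum>i<n. \<bar>b i\<bar>) powr p"
      proof (rule AE_I2)
        fix x assume "x \<in> space M"
        then obtain i where i: "i < n" "h x = b i" using hval by blast
        have "\<bar>b i\<bar> \<le> (\<Sum>i<n. \<bar>b i\<bar>)" using i by (intro member_le_sum) auto
        then show "norm (\<bar>h x\<bar> powr p) \<le> (\<Sum>i<n. \<bar>b i\<bar>) powr p"
          using i p by (simp add: powr_mono2)
      qed
    qed measurable
  next
    assume "\<exists>i<n. b i = 0"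
    then obtain i0 where i0: "i0 < n" "b i0 = 0" by blast
    show ?thesis
    proof (rule Bochner_Integration.integrable_bound)
      show "integrable M (\<lambda>x. 2 powr p * \<bar>f x\<bar> powr p)"
        using f unfolding in_Lp_def by simp
      show "AE x in M. norm (\<bar>h x\<bar> powr p) \<le> norm (2 powr p * \<bar>f x\<bar> powr p)"
      proof (rule AE_I2)
        fix x assume x: "x \<in> space M"
        have "\<bar>f x - h x\<bar> \<le> \<bar>f x - b i0\<bar>" using A(5) x i0 unfolding h_def by blast
        then have "\<bar>h x\<bar> \<le> 2 * \<bar>f x\<bar>" using i0 by linarith
        then have "\<bar>h x\<bar> powr p \<le> (2 * \<bar>f x\<bar>) powr p" using p by (intro powr_mono2) auto
        also have "\<dots> = 2 powr p * \<bar>f x\<bar> powr p" by (simp add: powr_mult)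
        finally show "norm (\<bar>h x\<bar> powr p) \<le> norm (2 powr p * \<bar>f x\<bar> powr p)" by simp
      qed
    qed measurable
  qed
  have hstep: "h \<in> step_fun_set M p k"
    unfolding step_fun_set_def in_Lp_def
    using hm int A(1,2,3) n(2) unfolding h_def by (intro CollectI conjI exI[of _ n] exI[of _ A] exI[of _ b]) auto
  have nn: "(\<integral>\<^sup>+x. ennreal (\<bar>f x - h x\<bar> powr p) \<partial>M) = qerr M p f n b"
    unfolding qerr_def h_def using A(4) by (intro nn_integral_cong) simp
  have "(LINT x|M. \<bar>f x - h x\<bar> powr p) = enn2real (\<integral>\<^sup>+x. ennreal (\<bar>f x - h x\<bar> powr p) \<partial>M)"
    by (rule integral_eq_nn_integral) auto
  also have "\<dots> \<le> \<epsilon> powr p" unfolding nn using q by (intro enn2real_leI) auto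
  finally have I: "(LINT x|M. \<bar>f x - h x\<bar> powr p) \<le> \<epsilon> powr p" .
  have "Lp_norm M p (\<lambda>x. f x - h x) \<le> (\<epsilon> powr p) powr (1 / p)"
    unfolding Lp_norm_def using I p by (intro powr_mono2) auto
  also have "\<dots> = \<epsilon>" using p e by (intro powr_powr_inv) auto
  finally show ?thesis using hstep by blast
qed

lemma sum_ind_single_enn:
  fixes n :: nat
  assumes "disjoint_family_on B {..<n}" "i < n" "x \<in> B i"
  shows "(\<Sum>j<n. g j * indicator (B j) x) = (g i :: ennreal)"
proof -
  have "(\<Sum>j<n. g j * indicator (B j) x) = (\<Sum>j<n. if j = i then g i else 0)"
  proof (intro sum.cong refl)
    fix j assume j: "j \<in> {..<n}"
    show "g j * indicator (B j) x = (if j = i then g i else 0)"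
    proof (cases "j = i")
      case False
      then have "x \<notin> B j" using assms j unfolding disjoint_family_on_def by blast
      then show ?thesis using False by simp
    qed (use assms in simp)
  qed
  also have "\<dots> = g i" using assms by (subst sum.delta) auto
  finally show ?thesis .
qed

lemma var_bound_c:
  assumes p: "1 \<le> p" and fm[measurable]: "f \<in> borel_measurable M" and Q[measurable]: "Q \<in> sets M"
    and Qf: "emeasure M Q < \<infinity>"
  shows "ennreal (var_p M p f Q powr p) \<le> ennreal (2 powr p) * (\<integral>\<^sup>+x\<in>Q. ennreal (\<bar>f x - c\<bar> powr p) \<partial>M)"
proof (cases "0 < measure M Q")
  case True
  define V where "V = (\<integral>\<^sup>+ x\<in>Q. (\<integral>\<^sup>+ y\<in>Q. ennreal (\<bar>f x - f y\<bar> powr p) \<partial>M) \<partial>M)"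
  define J where "J = (\<integral>\<^sup>+x\<in>Q. ennreal (\<bar>f x - c\<bar> powr p) \<partial>M)"
  have QT: "emeasure M Q \<noteq> top" using Qf by simp
  have Qe: "emeasure M Q = ennreal (measure M Q)" using QT by (simp add: emeasure_eq_ennreal_measure)
  have Q0: "emeasure M Q \<noteq> 0" using True Qe by simp
  have "var_p M p f Q powr p = enn2real V / measure M Q"
    using var_p_pow[of p M f Q] p True unfolding V_def by simp
  then have "ennreal (var_p M p f Q powr p) = ennreal (enn2real V) / emeasure M Q"
    using True Qe by (simp add: divide_ennreal)
  also have "\<dots> \<le> V / emeasure M Q"
    by (intro divide_right_mono_ennreal) (cases "V = top", auto simp: less_top)
  also have "\<dots> \<le> (ennreal (2 powr p) * J * emeasure M Q) / emeasure M Q"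
    using Vbound[OF p fm Q, of c] unfolding V_def J_def
    by (intro divide_right_mono_ennreal) (simp add: algebra_simps)
  also have "\<dots> = ennreal (2 powr p) * J"
    using Q0 QT by (rule ennreal_mult_divide_eq)
  finally show ?thesis unfolding J_def .
next
  case False
  then show ?thesis using p unfolding var_p_def by simp
qed

lemma lower:
  assumes p: "1 \<le> p" and f: "in_Lp M p f" and h: "h \<in> step_fun_set M p k"
    and err: "Lp_norm M p (\<lambda>x. f x - h x) \<le> \<epsilon>"
  shows "Var_k M p k f \<le> ennreal (2 * \<epsilon>)"
proof -
  have fm[measurable]: "f \<in> borel_measurable M" using f by (rule in_Lp_meas)
  obtain l Aa a where hl: "in_Lp M p h" "l \<le> k" "\<forall>i<l. Aa i \<in> sets M" "disjoint_family_on Aa {..<l}"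
    "(\<Union>i<l. Aa i) = space M" "h = (\<lambda>x. \<Sum>i<l. a i * indicator (Aa i) x)"
    using h unfolding step_fun_set_def by blast
  have hm[measurable]: "h \<in> borel_measurable M" using hl(1) by (rule in_Lp_meas)
  have intd: "integrable M (\<lambda>x. \<bar>f x - h x\<bar> powr p)"
  proof (rule Bochner_Integration.integrable_bound)
    show "integrable M (\<lambda>x. 2 powr (p-1) * (\<bar>f x\<bar> powr p + \<bar>h x\<bar> powr p))"
      using f hl(1) unfolding in_Lp_def by auto
    show "AE x in M. norm (\<bar>f x - h x\<bar> powr p) \<le> norm (2 powr (p-1) * (\<bar>f x\<bar> powr p + \<bar>h x\<bar> powr p))"
      using abs_diff_powr_le[OF p] by (intro AE_I2) simp
  qed measurable
  define I where "I = (LINT x|M. \<bar>f x - h x\<bar> powr p)"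
  have I0: "0 \<le> I" unfolding I_def by simp
  have e0: "0 \<le> \<epsilon>" using err unfolding Lp_norm_def by (meson order_trans powr_ge_zero)
  have Ie: "I \<le> \<epsilon> powr p"
  proof -
    have "I = (I powr (1/p)) powr p" using I0 p by (simp add: powr_inv_powr)
    also have "\<dots> \<le> \<epsilon> powr p" using err p unfolding Lp_norm_def I_def by (intro powr_mono2) auto
    finally show ?thesis .
  qed
  have NI: "(\<integral>\<^sup>+x. ennreal (\<bar>f x - h x\<bar> powr p) \<partial>M) = ennreal I"
    unfolding I_def by (rule nn_integral_eq_integral[OF intd]) simp
  have "Var_k_on M p k f A \<le> ennreal (2 * \<epsilon>)" if A[measurable]: "A \<in> sets M" and Af: "emeasure M A < \<infinity>" for A
  proof -
    define Q where "Q i = A \<inter> Aa i" for i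
    have Qm[measurable]: "\<And>i. i < l \<Longrightarrow> Q i \<in> sets M" using hl(3) unfolding Q_def by auto
    have Qdisj: "disjoint_family_on Q {..<l}"
      using hl(4) unfolding Q_def disjoint_family_on_def by blast
    have QU: "(\<Union>i<l. Q i) = A"
      using hl(5) sets.sets_into_space[OF A] unfolding Q_def by blast
    have Qf: "emeasure M (Q i) < \<infinity>" for i
    proof -
      have "emeasure M (Q i) \<le> emeasure M A" by (rule emeasure_mono) (auto simp: Q_def)
      then show ?thesis using Af by (rule le_less_trans)
    qed
    have hQ: "h x = a i" if "i < l" "x \<in> Q i" for i x
      using sum_ind_single[OF hl(4), of i x a] that hl(6) unfolding Q_def by simp
    have "(\<Sum>i<l. ennreal (var_p M p f (Q i) powr p))
        \<le> (\<Sum>i<l. ennreal (2 powr p) * (\<integral>\<^sup>+x\<in>Q i. ennreal (\<bar>f x - a i\<bar> powr p) \<partial>M))"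
      using Qf by (intro sum_mono var_bound_c[OF p fm]) (auto intro: Qm)
    also have "\<dots> = ennreal (2 powr p) * (\<Sum>i<l. \<integral>\<^sup>+x. ennreal (\<bar>f x - h x\<bar> powr p) * indicator (Q i) x \<partial>M)"
      unfolding sum_distrib_left
    proof (intro sum.cong refl arg_cong[where f="\<lambda>t. ennreal (2 powr p) * t"] nn_integral_cong)
      fix i x assume i: "i \<in> {..<l}"
      show "ennreal (\<bar>f x - a i\<bar> powr p) * indicator (Q i) x = ennreal (\<bar>f x - h x\<bar> powr p) * indicator (Q i) x"
        using hQ[of i x] i by (cases "x \<in> Q i") auto
    qed
    also have "(\<Sum>i<l. \<integral>\<^sup>+x. ennreal (\<bar>f x - h x\<bar> powr p) * indicator (Q i) x \<partial>M)
        = (\<integral>\<^sup>+x. (\<Sum>i<l. ennreal (\<bar>f x - h x\<bar> powr p) * indicator (Q i) x) \<partial>M)"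
      by (intro nn_integral_sum[symmetric]) auto
    also have "\<dots> \<le> (\<integral>\<^sup>+x. ennreal (\<bar>f x - h x\<bar> powr p) \<partial>M)"
    proof (intro nn_integral_mono)
      fix x assume "x \<in> space M"
      show "(\<Sum>i<l. ennreal (\<bar>f x - h x\<bar> powr p) * indicator (Q i) x) \<le> ennreal (\<bar>f x - h x\<bar> powr p)"
      proof (cases "\<exists>j<l. x \<in> Q j")
        case True
        then obtain j where j: "j < l" "x \<in> Q j" by blast
        have "(\<Sum>i<l. ennreal (\<bar>f x - h x\<bar> powr p) * indicator (Q i) x) = ennreal (\<bar>f x - h x\<bar> powr p)"
          by (rule sum_ind_single_enn[OF Qdisj j])
        then show ?thesis by (rule eq_refl)
      next
        case False
        then have z: "(\<Sum>i<l. ennreal (\<bar>f x - h x\<bar> powr p) * indicator (Q i) x) = 0"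
          by (intro sum.neutral) auto
        show ?thesis by (simp only: z zero_le)
      qed
    qed
    finally have "(\<Sum>i<l. ennreal (var_p M p f (Q i) powr p)) \<le> ennreal (2 powr p) * ennreal I"
      unfolding NI by (simp add: mult_left_mono)
    also have "\<dots> = ennreal (2 powr p * I)" using I0 by (simp add: ennreal_mult)
    finally have "ennreal (\<Sum>i<l. var_p M p f (Q i) powr p) \<le> ennreal (2 powr p * I)"
      by (subst sum_ennreal[symmetric]) auto
    then have S: "(\<Sum>i<l. var_p M p f (Q i) powr p) \<le> 2 powr p * I"
      using I0 by (subst (asm) ennreal_le_iff) auto
    also have "\<dots> \<le> 2 powr p * \<epsilon> powr p" using Ie by (intro mult_left_mono) auto
    also have "\<dots> = (2 * \<epsilon>) powr p" using e0 by (simp add: powr_mult)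
    finally have S2: "(\<Sum>i<l. var_p M p f (Q i) powr p) \<le> (2 * \<epsilon>) powr p" .
    have "var_coll M p f l Q \<le> ((2 * \<epsilon>) powr p) powr (1/p)"
      unfolding var_coll_def using S2 p by (intro powr_mono2) (auto intro: sum_nonneg)
    also have "\<dots> = 2 * \<epsilon>" using e0 p by (intro powr_powr_inv) auto
    finally have vc: "var_coll M p f l Q \<le> 2 * \<epsilon>" .
    have "Var_k_on M p k f A \<le> ennreal (var_coll M p f l Q)"
      unfolding Var_k_on_def
      by (rule INF_lower2[of "(l, Q)"]) (use hl(2) Qm Qdisj QU in auto)
    also have "\<dots> \<le> ennreal (2 * \<epsilon>)" using vc by (rule ennreal_leI)
    finally show ?thesis .
  qed
  then show ?thesis unfolding Var_k_def by (intro SUP_least) auto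
qed

lemma tail:
  assumes p: "0 < p" and f: "in_Lp M p f" and eta: "0 < \<eta>"
  shows "\<exists>\<delta>>0. (\<integral>\<^sup>+x. ennreal (\<bar>f x\<bar> powr p) * indicator {x\<in>space M. \<bar>f x\<bar> \<le> \<delta>} x \<partial>M) < ennreal \<eta>"
proof -
  have fm[measurable]: "f \<in> borel_measurable M" using f by (rule in_Lp_meas)
  define F where "F j x = ennreal (\<bar>f x\<bar> powr p) * indicator {x\<in>space M. \<bar>f x\<bar> \<le> inverse (real (Suc j))} x" for j x
  have Fm[measurable]: "\<And>j. F j \<in> borel_measurable M" unfolding F_def by measurable
  have dec: "decseq F"
  proof (intro decseq_SucI le_funI)
    fix j x
    have h: "inverse (real (Suc (Suc j))) \<le> inverse (real (Suc j))" by (simp add: field_simps)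
    show "F (Suc j) x \<le> F j x"
    proof (cases "x \<in> space M \<and> \<bar>f x\<bar> \<le> inverse (real (Suc (Suc j)))")
      case True
      then have "x \<in> space M \<and> \<bar>f x\<bar> \<le> inverse (real (Suc j))" using h by linarith
      then show ?thesis using True unfolding F_def indicator_def by (simp del: of_nat_Suc)
    next
      case False
      then show ?thesis unfolding F_def indicator_def by (simp del: of_nat_Suc)
    qed
  qed
  have fin: "(\<integral>\<^sup>+ x. F j x \<partial>M) < \<infinity>" for j
  proof -
    have "(\<integral>\<^sup>+ x. F j x \<partial>M) \<le> (\<integral>\<^sup>+ x. ennreal (\<bar>f x\<bar> powr p) \<partial>M)"
      unfolding F_def by (intro nn_integral_mono) (auto split: split_indicator)
    then show ?thesis using in_Lp_fin[OF f] by (rule le_less_trans)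
  qed
  have z: "(INF j. F j x) = 0" for x
  proof (cases "f x = 0")
    case True
    then show ?thesis unfolding F_def using p by simp
  next
    case False
    then obtain j where "inverse (real (Suc j)) < \<bar>f x\<bar>" using reals_Archimedean[of "\<bar>f x\<bar>"] by auto
    then have "F j x = 0" unfolding F_def by auto
    then have "(INF j. F j x) \<le> 0" by (metis INF_lower2 UNIV_I order_refl)
    then show ?thesis by simp
  qed
  have "(\<integral>\<^sup>+ x. (INF j. F j x) \<partial>M) = (INF j. integral\<^sup>N M (F j))"
    using dec Fm fin by (rule nn_integral_monotone_convergence_INF_decseq)
  then have "(INF j. integral\<^sup>N M (F j)) < ennreal \<eta>" using z eta by simp
  then obtain j where "integral\<^sup>N M (F j) < ennreal \<eta>" by (auto simp: INF_less_iff)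
  then show ?thesis unfolding F_def by (intro exI[of _ "inverse (real (Suc j))"]) auto
qed

lemma markov_fin:
  assumes p: "0 < p" and f: "in_Lp M p f" and d: "0 < \<delta>"
  shows "emeasure M {x\<in>space M. \<delta> < \<bar>f x\<bar>} < \<infinity>"
proof -
  have fm[measurable]: "f \<in> borel_measurable M" using f by (rule in_Lp_meas)
  define A where "A = {x\<in>space M. \<delta> < \<bar>f x\<bar>}"
  have Am[measurable]: "A \<in> sets M" unfolding A_def by measurable
  have "ennreal (\<delta> powr p) * emeasure M A = (\<integral>\<^sup>+x. ennreal (\<delta> powr p) * indicator A x \<partial>M)"
    by (simp add: nn_integral_cmult_indicator)
  also have "\<dots> \<le> (\<integral>\<^sup>+ x. ennreal (\<bar>f x\<bar> powr p) \<partial>M)"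
    using d p unfolding A_def by (intro nn_integral_mono) (auto split: split_indicator intro!: ennreal_leI powr_mono2)
  also have "\<dots> < \<infinity>" using in_Lp_fin[OF f] .
  finally have "ennreal (\<delta> powr p) * emeasure M A < top" by simp
  moreover have "ennreal (\<delta> powr p) \<noteq> 0" using d by simp
  ultimately show ?thesis unfolding A_def[symmetric] by (auto simp: ennreal_mult_less_top less_top)
qed

lemma var_coll_nonneg: "0 \<le> var_coll M p f l P"
  unfolding var_coll_def by simp

lemma get_partition:
  assumes "Var_k_on M p k f A < ennreal t"
  obtains l P where "l \<le> k" "\<forall>i<l. P i \<in> sets M" "disjoint_family_on P {..<l}" "(\<Union>i<l. P i) = A"
    "var_coll M p f l P < t"
proof -
  obtain lP where lP: "lP \<in> {(l, P). l \<le> k \<and> (\<forall>i<l. P i \<in> sets M) \<and>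
       disjoint_family_on P {..<l} \<and> (\<Union>i<l. P i) = A}" "ennreal (case lP of (l, P) \<Rightarrow> var_coll M p f l P) < ennreal t"
    using assms unfolding Var_k_on_def INF_less_iff by (auto simp: case_prod_beta)
  obtain l P where "lP = (l, P)" by (cases lP)
  then show ?thesis using lP that var_coll_nonneg[of M p f l P] by (auto simp: ennreal_less_iff)
qed

lemma pos_aux: "0 < (\<epsilon>::real) \<Longrightarrow> \<forall>m. 0 \<le> \<epsilon> + inverse (real (Suc m))"
proof
  fix m assume "0 < \<epsilon>"
  moreover have "0 < inverse (real (Suc m))" by simp
  ultimately show "0 \<le> \<epsilon> + inverse (real (Suc m))" by linarith
qed

lemma u_lim:
  assumes p: "1 \<le> p" and e: "0 < \<epsilon>"
  shows "(\<lambda>m. ennreal ((\<epsilon> + inverse (real (Suc m))) powr p + inverse (real (Suc m)))) \<longlonglongrightarrow> ennreal (\<epsilon> powr p)"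
proof -
  have c: "(\<lambda>m. \<epsilon> + inverse (real (Suc m))) \<longlonglongrightarrow> \<epsilon> + 0"
    by (intro tendsto_add tendsto_const LIMSEQ_inverse_real_of_nat)
  have "(\<lambda>m. (\<epsilon> + inverse (real (Suc m))) powr p) \<longlonglongrightarrow> (\<epsilon> + 0) powr p"
    by (rule tendsto_powr'[OF c tendsto_const]) (use e in auto)
  then have "(\<lambda>m. (\<epsilon> + inverse (real (Suc m))) powr p + inverse (real (Suc m))) \<longlonglongrightarrow> (\<epsilon> + 0) powr p + 0"
    by (intro tendsto_add LIMSEQ_inverse_real_of_nat)
  then show ?thesis by (intro tendsto_ennrealI) simp
qed

lemma u_lim':
  assumes p: "1 \<le> p" and e: "0 < \<epsilon>"
  shows "(\<lambda>m. ennreal ((\<epsilon> + inverse (real (Suc m))) powr p)) \<longlonglongrightarrow> ennreal (\<epsilon> powr p)"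
proof -
  have c: "(\<lambda>m. \<epsilon> + inverse (real (Suc m))) \<longlonglongrightarrow> \<epsilon> + 0"
    by (intro tendsto_add tendsto_const LIMSEQ_inverse_real_of_nat)
  have "(\<lambda>m. (\<epsilon> + inverse (real (Suc m))) powr p) \<longlonglongrightarrow> (\<epsilon> + 0) powr p"
    by (rule tendsto_powr'[OF c tendsto_const]) (use e in auto)
  then show ?thesis by (intro tendsto_ennrealI) simp
qed

lemma upper_fin:
  assumes p: "1 \<le> p" and f: "in_Lp M p f" and fin: "emeasure M (space M) < \<infinity>"
    and nz: "emeasure M (space M) \<noteq> 0" and V: "Var_k_on M p k f (space M) \<le> ennreal \<epsilon>" and e: "0 < \<epsilon>"
  shows "\<exists>h\<in>step_fun_set M p k. Lp_norm M p (\<lambda>x. f x - h x) \<le> \<epsilon>"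
proof -
  have fm[measurable]: "f \<in> borel_measurable M" using f by (rule in_Lp_meas)
  have sne: "space M \<noteq> {}" using nz by auto
  have step: "\<exists>a. qerr M p f k a \<le> ennreal ((\<epsilon> + inverse (real (Suc m))) powr p) \<and> 0 < k" for m
  proof -
    have "ennreal \<epsilon> < ennreal (\<epsilon> + inverse (real (Suc m)))" by (intro ennreal_lessI add_pos_pos[OF e]) simp_all
    with V have "Var_k_on M p k f (space M) < ennreal (\<epsilon> + inverse (real (Suc m)))" by (rule le_less_trans)
    then obtain l P where lP: "l \<le> k" "\<forall>i<l. P i \<in> sets M" "disjoint_family_on P {..<l}" "(\<Union>i<l. P i) = space M"
      and lt: "var_coll M p f l P < \<epsilon> + inverse (real (Suc m))"
      by (rule get_partition)
    have Pf: "\<forall>i<l. emeasure M (P i) < \<infinity>"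
    proof (intro allI impI)
      fix i assume "i < l"
      then have "emeasure M (P i) \<le> emeasure M (space M)" using lP(4) by (intro emeasure_mono) auto
      then show "emeasure M (P i) < \<infinity>" using fin by (rule le_less_trans)
    qed
    obtain a where a: "(\<integral>\<^sup>+x. (INF i\<in>{..<l}. ennreal (\<bar>f x - a i\<bar> powr p)) * indicator (space M) x \<partial>M)
           \<le> ennreal (var_coll M p f l P powr p)"
      using part_bound[OF p f lP(2) lP(4) Pf] by blast
    have "qerr M p f k a \<le> (\<integral>\<^sup>+x. (INF i\<in>{..<l}. ennreal (\<bar>f x - a i\<bar> powr p)) * indicator (space M) x \<partial>M)"
      unfolding qerr_def using lP(1) by (intro nn_integral_mono) (auto intro!: INF_superset_mono)
    also note a
    also have "ennreal (var_coll M p f l P powr p) \<le> ennreal ((\<epsilon> + inverse (real (Suc m))) powr p)"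
      using lt p by (intro ennreal_leI powr_mono2) (auto simp: var_coll_nonneg less_imp_le)
    finally have q: "qerr M p f k a \<le> ennreal ((\<epsilon> + inverse (real (Suc m))) powr p)" .
    have "l \<noteq> 0" using lP(4) sne by auto
    then show ?thesis using q lP(1) by auto
  qed
  then have k: "0 < k" by blast
  obtain a where a: "\<And>m. qerr M p f k (a m) \<le> ennreal ((\<epsilon> + inverse (real (Suc m))) powr p)"
    using step by metis
  obtain b where b: "qerr M p f k b \<le> ennreal (\<epsilon> powr p)"
    using compact_qerr[OF p fm nz a u_lim'[OF p e]] by auto
  show ?thesis using qerr_to_step[OF p f k order_refl b] e fin by auto
qed

lemma upper_gen:
  assumes p: "1 \<le> p" and f: "in_Lp M p f"
    and nz: "emeasure M (space M) \<noteq> 0" and V: "Var_k M p k f \<le> ennreal \<epsilon>" and e: "0 < \<epsilon>"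
  shows "\<exists>h\<in>step_fun_set M p (Suc k). Lp_norm M p (\<lambda>x. f x - h x) \<le> \<epsilon>"
proof -
  have fm[measurable]: "f \<in> borel_measurable M" using f by (rule in_Lp_meas)
  have step: "\<exists>a. qerr M p f (Suc k) a \<le> ennreal ((\<epsilon> + inverse (real (Suc m))) powr p + inverse (real (Suc m))) \<and> a k = 0" for m
  proof -
    define \<eta> where "\<eta> = inverse (real (Suc m))"
    have eta: "0 < \<eta>" unfolding \<eta>_def by simp
    obtain \<delta> where d: "0 < \<delta>" and tl: "(\<integral>\<^sup>+x. ennreal (\<bar>f x\<bar> powr p) * indicator {x\<in>space M. \<bar>f x\<bar> \<le> \<delta>} x \<partial>M) < ennreal \<eta>"
      using tail[of p M f \<eta>] p f eta by auto
    define A where "A = {x\<in>space M. \<delta> < \<bar>f x\<bar>}"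
    have Am[measurable]: "A \<in> sets M" unfolding A_def by measurable
    have Af: "emeasure M A < \<infinity>" unfolding A_def using markov_fin[of p M f \<delta>] p f d by auto
    have "Var_k_on M p k f A \<le> Var_k M p k f" unfolding Var_k_def using Am Af by (intro SUP_upper) auto
    also note V
    also have "ennreal \<epsilon> < ennreal (\<epsilon> + \<eta>)" using e eta by (intro ennreal_lessI) auto
    finally obtain l P where lP: "l \<le> k" "\<forall>i<l. P i \<in> sets M" "disjoint_family_on P {..<l}" "(\<Union>i<l. P i) = A"
      and lt: "var_coll M p f l P < \<epsilon> + \<eta>"
      by (rule get_partition)
    have Pf: "\<forall>i<l. emeasure M (P i) < \<infinity>"
    proof (intro allI impI)
      fix i assume "i < l"
      then have "emeasure M (P i) \<le> emeasure M A" using lP(4) by (intro emeasure_mono) auto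
      then show "emeasure M (P i) < \<infinity>" using Af by (rule le_less_trans)
    qed
    obtain a0 where a0: "(\<integral>\<^sup>+x. (INF i\<in>{..<l}. ennreal (\<bar>f x - a0 i\<bar> powr p)) * indicator A x \<partial>M)
           \<le> ennreal (var_coll M p f l P powr p)"
      using part_bound[OF p f lP(2) lP(4) Pf] by blast
    define a where "a = a0(k := 0)"
    have "qerr M p f (Suc k) a \<le> (\<integral>\<^sup>+x. (INF i\<in>{..<l}. ennreal (\<bar>f x - a0 i\<bar> powr p)) * indicator A x
        + ennreal (\<bar>f x\<bar> powr p) * indicator {x\<in>space M. \<bar>f x\<bar> \<le> \<delta>} x \<partial>M)"
      unfolding qerr_def
    proof (intro nn_integral_mono)
      fix x assume x: "x \<in> space M"
      show "(INF i\<in>{..<Suc k}. ennreal (\<bar>f x - a i\<bar> powr p))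
         \<le> (INF i\<in>{..<l}. ennreal (\<bar>f x - a0 i\<bar> powr p)) * indicator A x
            + ennreal (\<bar>f x\<bar> powr p) * indicator {x\<in>space M. \<bar>f x\<bar> \<le> \<delta>} x"
      proof (cases "x \<in> A")
        case True
        have "(INF i\<in>{..<Suc k}. ennreal (\<bar>f x - a i\<bar> powr p)) \<le> (INF i\<in>{..<l}. ennreal (\<bar>f x - a0 i\<bar> powr p))"
          using lP(1) by (intro INF_superset_mono) (auto simp: a_def)
        then show ?thesis using True by (simp add: add_increasing2)
      next
        case False
        then have "x \<in> {x\<in>space M. \<bar>f x\<bar> \<le> \<delta>}" using x unfolding A_def by auto
        moreover have "(INF i\<in>{..<Suc k}. ennreal (\<bar>f x - a i\<bar> powr p)) \<le> ennreal (\<bar>f x - a k\<bar> powr p)"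
          by (intro INF_lower) auto
        ultimately show ?thesis using False by (simp add: a_def)
      qed
    qed
    also have "\<dots> = (\<integral>\<^sup>+x. (INF i\<in>{..<l}. ennreal (\<bar>f x - a0 i\<bar> powr p)) * indicator A x \<partial>M)
        + (\<integral>\<^sup>+x. ennreal (\<bar>f x\<bar> powr p) * indicator {x\<in>space M. \<bar>f x\<bar> \<le> \<delta>} x \<partial>M)"
      by (rule nn_integral_add) measurable
    also have "\<dots> \<le> ennreal (var_coll M p f l P powr p) + ennreal \<eta>"
      using a0 tl by (intro add_mono) auto
    also have "\<dots> \<le> ennreal ((\<epsilon> + \<eta>) powr p) + ennreal \<eta>"
      using lt p by (intro add_mono ennreal_leI powr_mono2) (auto simp: var_coll_nonneg less_imp_le)
    also have "\<dots> = ennreal ((\<epsilon> + \<eta>) powr p + \<eta>)" using eta by simp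
    finally show ?thesis unfolding \<eta>_def a_def by auto
  qed
  obtain a where a: "\<And>m. qerr M p f (Suc k) (a m) \<le> ennreal ((\<epsilon> + inverse (real (Suc m))) powr p + inverse (real (Suc m)))"
    and ak: "\<And>m. a m k = 0"
    using step by metis
  obtain b where b: "qerr M p f (Suc k) b \<le> ennreal (\<epsilon> powr p)" and bk: "b k = 0"
    using compact_qerr[OF p fm nz a u_lim[OF p e]] ak by auto
  show ?thesis using qerr_to_step[OF p f _ order_refl b] e bk by auto
qed

lemma Var_k_on_anti: "k \<le> k' \<Longrightarrow> Var_k_on M p k' f A \<le> Var_k_on M p k f A"
  unfolding Var_k_on_def by (rule INF_superset_mono) auto

lemma Var_k_anti: "k \<le> k' \<Longrightarrow> Var_k M p k' f \<le> Var_k M p k f"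
  unfolding Var_k_def by (intro SUP_mono) (auto intro: Var_k_on_anti)

lemma Var_on_space_le: "emeasure M (space M) < \<infinity> \<Longrightarrow> Var_k_on M p k f (space M) \<le> Var_k M p k f"
  unfolding Var_k_def by (intro SUP_upper) auto

lemma tendsto0_crit:
  fixes X :: "nat \<Rightarrow> ennreal"
  assumes "\<And>\<epsilon>. 0 < \<epsilon> \<Longrightarrow> \<exists>n. \<forall>k\<ge>n. X k \<le> ennreal \<epsilon>"
  shows "X \<longlonglongrightarrow> 0"
proof (rule order_tendstoI)
  fix y :: ennreal assume "y < 0" then show "eventually (\<lambda>k. y < X k) sequentially" by simp
next
  fix y :: ennreal assume y: "0 < y"
  obtain \<epsilon> where e: "0 < \<epsilon>" "ennreal \<epsilon> < y"
  proof (cases y)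
    case (real r)
    then have "0 < r" using y by simp
    then show ?thesis using real by (intro that[of "r/2"]) (auto intro: ennreal_lessI)
  next
    case top
    then show ?thesis by (intro that[of 1]) auto
  qed
  obtain n where "\<forall>k\<ge>n. X k \<le> ennreal \<epsilon>" using assms[OF e(1)] by blast
  then show "eventually (\<lambda>k. X k < y) sequentially"
    unfolding eventually_sequentially using e(2) by (meson le_less_trans)
qed

lemma tendsto0_D:
  fixes X :: "nat \<Rightarrow> ennreal"
  assumes "X \<longlonglongrightarrow> 0" "0 < \<epsilon>"
  shows "\<exists>n. \<forall>k\<ge>n. X k \<le> ennreal \<epsilon>"
proof -
  have "eventually (\<lambda>k. X k < ennreal \<epsilon>) sequentially"
    using assms by (intro order_tendstoD(2)[OF assms(1)]) simp
  then show ?thesis unfolding eventually_sequentially by (meson less_imp_le)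
qed

lemma N_char:
  assumes "N_approx M p \<epsilon> \<A> \<noteq> \<infinity>"
  shows "\<exists>n. N_approx M p \<epsilon> \<A> = enat n \<and> 1 \<le> n \<and>
     (\<forall>f\<in>\<A>. \<exists>h\<in>step_fun_set M p n. Lp_norm M p (\<lambda>x. f x - h x) \<le> \<epsilon>)"
proof -
  define S where "S = {enat k | k. k \<ge> 1 \<and>
     (\<forall>f\<in>\<A>. \<exists>h\<in>step_fun_set M p k. Lp_norm M p (\<lambda>x. f x - h x) \<le> \<epsilon>)}"
  have N: "N_approx M p \<epsilon> \<A> = Inf S" unfolding N_approx_def S_def ..
  have "S \<noteq> {}" using assms N by (auto simp: Inf_enat_def)
  then have "Inf S \<in> S" unfolding Inf_enat_def by (auto intro: LeastI_ex)
  then show ?thesis unfolding N S_def by auto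
qed

lemma N_le:
  assumes "1 \<le> n" "\<forall>f\<in>\<A>. \<exists>h\<in>step_fun_set M p n. Lp_norm M p (\<lambda>x. f x - h x) \<le> \<epsilon>"
  shows "N_approx M p \<epsilon> \<A> \<le> enat n"
  unfolding N_approx_def using assms by (intro Inf_lower) auto

theorem theorem4p12:
  fixes M :: "'a measure" and p :: real and \<A> :: "('a \<Rightarrow> real) set"
  assumes nonzero: "emeasure M (space M) \<noteq> 0"
    and p: "1 \<le> p"
    and A: "\<forall>f\<in>\<A>. in_Lp M p f"
  shows "(unif_approx M p \<A> \<longleftrightarrow> ((\<lambda>k. SUP f\<in>\<A>. Var_k M p k f) \<longlonglongrightarrow> 0))
    \<and> (unif_approx M p \<A> \<longrightarrow> (\<forall>\<epsilon>>0.
          enat (r_eps M p \<A> (2 * \<epsilon>)) \<le> N_approx M p \<epsilon> \<A> \<and>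
          N_approx M p \<epsilon> \<A> \<le> enat (r_eps M p \<A> \<epsilon> + 1)))
    \<and> (emeasure M (space M) < \<infinity> \<longrightarrow>
         (unif_approx M p \<A> \<longleftrightarrow> ((\<lambda>k. SUP f\<in>\<A>. Var_k_on M p k f (space M)) \<longlonglongrightarrow> 0))
       \<and> (unif_approx M p \<A> \<longrightarrow> (\<forall>\<epsilon>>0.
          m_eps M p \<A> (2 * \<epsilon>) \<le> r_eps M p \<A> (2 * \<epsilon>) \<and>
          enat (r_eps M p \<A> (2 * \<epsilon>)) \<le> N_approx M p \<epsilon> \<A> \<and>
          N_approx M p \<epsilon> \<A> \<le> enat (m_eps M p \<A> \<epsilon>) \<and>
          m_eps M p \<A> \<epsilon> \<le> r_eps M p \<A> \<epsilon>)))"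
proof -
  define S where "S k = (SUP f\<in>\<A>. Var_k M p k f)" for k
  define T where "T k = (SUP f\<in>\<A>. Var_k_on M p k f (space M))" for k
  have S_anti: "k \<le> k' \<Longrightarrow> S k' \<le> S k" for k k'
    unfolding S_def by (intro SUP_mono) (auto intro: Var_k_anti)
  have T_anti: "k \<le> k' \<Longrightarrow> T k' \<le> T k" for k k'
    unfolding T_def by (intro SUP_mono) (auto intro: Var_k_on_anti)
  have TS: "T k \<le> S k" if fin: "emeasure M (space M) < \<infinity>" for k
    unfolding T_def S_def using Var_on_space_le[OF fin] by (intro SUP_mono) blast
  have bnd: "\<exists>n. N_approx M p \<epsilon> \<A> = enat n \<and> 1 \<le> n \<and> S n \<le> ennreal (2 * \<epsilon>)"
    if u: "unif_approx M p \<A>" and e: "0 < \<epsilon>" for \<epsilon>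
  proof -
    have "N_approx M p \<epsilon> \<A> \<noteq> \<infinity>" using u e unfolding unif_approx_def by auto
    then obtain n where n: "N_approx M p \<epsilon> \<A> = enat n" "1 \<le> n"
      "\<forall>f\<in>\<A>. \<exists>h\<in>step_fun_set M p n. Lp_norm M p (\<lambda>x. f x - h x) \<le> \<epsilon>"
      using N_char by blast
    have "S n \<le> ennreal (2 * \<epsilon>)"
      unfolding S_def
    proof (rule SUP_least)
      fix f assume f: "f \<in> \<A>"
      then obtain h where "h \<in> step_fun_set M p n" "Lp_norm M p (\<lambda>x. f x - h x) \<le> \<epsilon>" using n(3) by blast
      then show "Var_k M p n f \<le> ennreal (2 * \<epsilon>)" using lower[OF p] A f by blast
    qed
    then show ?thesis using n by blast
  qed
  have i_ii: "S \<longlonglongrightarrow> 0" if u: "unif_approx M p \<A>"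
  proof (rule tendsto0_crit)
    fix \<epsilon> :: real assume e: "0 < \<epsilon>"
    obtain n where n: "S n \<le> ennreal (2 * (\<epsilon>/2))" using bnd[OF u, of "\<epsilon>/2"] e by auto
    then show "\<exists>n. \<forall>k\<ge>n. S k \<le> ennreal \<epsilon>" using S_anti by (metis order_trans times_divide_eq_right nonzero_mult_div_cancel_left zero_neq_numeral)
  qed
  have ii_i: "unif_approx M p \<A>" if t: "S \<longlonglongrightarrow> 0"
    unfolding unif_approx_def
  proof (intro allI impI)
    fix \<epsilon> :: real assume e: "0 < \<epsilon>"
    obtain n where "\<forall>k\<ge>n. S k \<le> ennreal \<epsilon>" using tendsto0_D[OF t e] by blast
    then have "S n \<le> ennreal \<epsilon>" by simp
    then have "\<forall>f\<in>\<A>. \<exists>h\<in>step_fun_set M p (Suc n). Lp_norm M p (\<lambda>x. f x - h x) \<le> \<epsilon>"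
      unfolding S_def using upper_gen[OF p _ nonzero _ e] A by (auto simp: SUP_le_iff)
    then have "N_approx M p \<epsilon> \<A> \<le> enat (Suc n)" by (intro N_le) auto
    then show "N_approx M p \<epsilon> \<A> \<noteq> \<infinity>" by (metis infinity_ileE)
  qed
  have r_ex: "r_eps M p \<A> \<epsilon> \<ge> 1 \<and> S (r_eps M p \<A> \<epsilon>) \<le> ennreal \<epsilon>" if "\<exists>k. k \<ge> 1 \<and> S k \<le> ennreal \<epsilon>" for \<epsilon>
    unfolding r_eps_def S_def[symmetric] using that by (rule LeastI_ex)
  have r_le: "r_eps M p \<A> \<epsilon> \<le> k" if "k \<ge> 1" "S k \<le> ennreal \<epsilon>" for \<epsilon> k
    unfolding r_eps_def S_def[symmetric] using that by (intro Least_le) simp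
  have m_ex: "m_eps M p \<A> \<epsilon> \<ge> 1 \<and> T (m_eps M p \<A> \<epsilon>) \<le> ennreal \<epsilon>" if "\<exists>k. k \<ge> 1 \<and> T k \<le> ennreal \<epsilon>" for \<epsilon>
    unfolding m_eps_def T_def[symmetric] using that by (rule LeastI_ex)
  have m_le: "m_eps M p \<A> \<epsilon> \<le> k" if "k \<ge> 1" "T k \<le> ennreal \<epsilon>" for \<epsilon> k
    unfolding m_eps_def T_def[symmetric] using that by (intro Least_le) simp
  have S_ex: "\<exists>k. k \<ge> 1 \<and> S k \<le> ennreal \<epsilon>" if u: "unif_approx M p \<A>" and e: "0 < \<epsilon>" for \<epsilon>
  proof -
    obtain n where "\<forall>k\<ge>n. S k \<le> ennreal \<epsilon>" using tendsto0_D[OF i_ii[OF u] e] by blast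
    then show ?thesis by (intro exI[of _ "max n 1"]) auto
  qed
  have r2: "enat (r_eps M p \<A> (2 * \<epsilon>)) \<le> N_approx M p \<epsilon> \<A>" if u: "unif_approx M p \<A>" and e: "0 < \<epsilon>" for \<epsilon>
  proof -
    obtain n where n: "N_approx M p \<epsilon> \<A> = enat n" "1 \<le> n" "S n \<le> ennreal (2 * \<epsilon>)" using bnd[OF u e] by blast
    then show ?thesis using r_le[OF n(2,3)] by simp
  qed
  have part2: "N_approx M p \<epsilon> \<A> \<le> enat (r_eps M p \<A> \<epsilon> + 1)" if u: "unif_approx M p \<A>" and e: "0 < \<epsilon>" for \<epsilon>
  proof -
    have r: "r_eps M p \<A> \<epsilon> \<ge> 1" "S (r_eps M p \<A> \<epsilon>) \<le> ennreal \<epsilon>" using r_ex[OF S_ex[OF u e]] by auto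
    then have "\<forall>f\<in>\<A>. \<exists>h\<in>step_fun_set M p (Suc (r_eps M p \<A> \<epsilon>)). Lp_norm M p (\<lambda>x. f x - h x) \<le> \<epsilon>"
      unfolding S_def using upper_gen[OF p _ nonzero _ e] A by (auto simp: SUP_le_iff)
    then show ?thesis by (simp add: N_le)
  qed
  have fin_part: "(unif_approx M p \<A> \<longleftrightarrow> T \<longlonglongrightarrow> 0) \<and> (unif_approx M p \<A> \<longrightarrow> (\<forall>\<epsilon>>0.
          m_eps M p \<A> (2 * \<epsilon>) \<le> r_eps M p \<A> (2 * \<epsilon>) \<and>
          enat (r_eps M p \<A> (2 * \<epsilon>)) \<le> N_approx M p \<epsilon> \<A> \<and>
          N_approx M p \<epsilon> \<A> \<le> enat (m_eps M p \<A> \<epsilon>) \<and>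
          m_eps M p \<A> \<epsilon> \<le> r_eps M p \<A> \<epsilon>))"
    if fin: "emeasure M (space M) < \<infinity>"
  proof -
    have T0: "T \<longlonglongrightarrow> 0" if u: "unif_approx M p \<A>"
    proof (rule tendsto0_crit)
      fix \<epsilon> :: real assume e: "0 < \<epsilon>"
      obtain n where "\<forall>k\<ge>n. S k \<le> ennreal \<epsilon>" using tendsto0_D[OF i_ii[OF u] e] by blast
      then show "\<exists>n. \<forall>k\<ge>n. T k \<le> ennreal \<epsilon>" using TS[OF fin] by (meson order_trans)
    qed
    have iii_i: "unif_approx M p \<A>" if t: "T \<longlonglongrightarrow> 0"
      unfolding unif_approx_def
    proof (intro allI impI)
      fix \<epsilon> :: real assume e: "0 < \<epsilon>"
      obtain n where "\<forall>k\<ge>n. T k \<le> ennreal \<epsilon>" using tendsto0_D[OF t e] by blast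
      then have "T (Suc n) \<le> ennreal \<epsilon>" by simp
      then have "\<forall>f\<in>\<A>. \<exists>h\<in>step_fun_set M p (Suc n). Lp_norm M p (\<lambda>x. f x - h x) \<le> \<epsilon>"
        unfolding T_def using upper_fin[OF p _ fin nonzero _ e] A by (auto simp: SUP_le_iff)
      then have "N_approx M p \<epsilon> \<A> \<le> enat (Suc n)" by (intro N_le) auto
      then show "N_approx M p \<epsilon> \<A> \<noteq> \<infinity>" by (metis infinity_ileE)
    qed
    have bounds: "m_eps M p \<A> (2 * \<epsilon>) \<le> r_eps M p \<A> (2 * \<epsilon>) \<and>
          enat (r_eps M p \<A> (2 * \<epsilon>)) \<le> N_approx M p \<epsilon> \<A> \<and>
          N_approx M p \<epsilon> \<A> \<le> enat (m_eps M p \<A> \<epsilon>) \<and>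
          m_eps M p \<A> \<epsilon> \<le> r_eps M p \<A> \<epsilon>" if u: "unif_approx M p \<A>" and e: "0 < \<epsilon>" for \<epsilon>
    proof (intro conjI)
      have e2: "0 < 2 * \<epsilon>" using e by simp
      have r2e: "r_eps M p \<A> (2 * \<epsilon>) \<ge> 1" "S (r_eps M p \<A> (2 * \<epsilon>)) \<le> ennreal (2 * \<epsilon>)"
        using r_ex[OF S_ex[OF u e2]] by auto
      show "m_eps M p \<A> (2 * \<epsilon>) \<le> r_eps M p \<A> (2 * \<epsilon>)"
        using r2e TS[OF fin] by (intro m_le) (auto intro: order_trans)
      show "enat (r_eps M p \<A> (2 * \<epsilon>)) \<le> N_approx M p \<epsilon> \<A>" by (rule r2[OF u e])
      have re: "r_eps M p \<A> \<epsilon> \<ge> 1" "S (r_eps M p \<A> \<epsilon>) \<le> ennreal \<epsilon>"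
        using r_ex[OF S_ex[OF u e]] by auto
      show "m_eps M p \<A> \<epsilon> \<le> r_eps M p \<A> \<epsilon>"
        using re TS[OF fin] by (intro m_le) (auto intro: order_trans)
      have me: "m_eps M p \<A> \<epsilon> \<ge> 1" "T (m_eps M p \<A> \<epsilon>) \<le> ennreal \<epsilon>"
        using m_ex re TS[OF fin] by (meson order_trans)+
      then have "\<forall>f\<in>\<A>. \<exists>h\<in>step_fun_set M p (m_eps M p \<A> \<epsilon>). Lp_norm M p (\<lambda>x. f x - h x) \<le> \<epsilon>"
        unfolding T_def using upper_fin[OF p _ fin nonzero _ e] A by (auto simp: SUP_le_iff)
      then show "N_approx M p \<epsilon> \<A> \<le> enat (m_eps M p \<A> \<epsilon>)" using me by (intro N_le) auto
    qed
    show ?thesis using T0 iii_i bounds by blast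
  qed
  show ?thesis
    unfolding S_def[symmetric] T_def[symmetric]
    using i_ii ii_i r2 part2 fin_part by blast
qed

end
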